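(* Let $\alpha\colon G\to\mathrm{Aut}(A)$ be a tracially amenable action of a discrete group $G$ on a unital C$^*$-algebra $A$ with $T(A)\neq\emptyset$. Then $G$ is amenable if and only if $A$ has a $G$-invariant tracial state.
   Context: $T(A)$ is the set of tracial states. For $\xi,\eta\in C_c(G,A)$ set $\langle\xi,\eta\rangle=\sum_g\xi(g)^*\eta(g)$, with $\ell^2(G,A)$ the completion and $\widetilde{\alpha}_g(\xi)(h)=\alpha_g(\xi(g^{-1}h))$; $\|x\|_{2,u}=\sup_{\tau\in T(A)}\tau(x^*x)^{1/2}$ for $x\in A$ and $\|\xi\|_{2,u}=\sup_\tau\tau(\langle\xi,\xi\rangle)^{1/2}$. The action is tracially amenable if for all finite $F\subseteq A$, $K\subseteq G$, $\varepsilon>0$ there is $\xi\in C_c(G,A)$ with $\|\xi\|\le1$, $\|\xi a-a\xi\|_{2,u}<\varepsilon$ ($a\in F$), $\|\langle\xi,\xi\rangle-1\|_{2,u}<\varepsilon$, $\|\widetilde\alpha_g(\xi)-\xi\|_{2,u}<\varepsilon$ ($g\in K$). *)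

theory Defs
  imports "HOL-Analysis.Analysis"
begin

text \<open>A unital C*-algebra: the carrier is a type of class real_normed_algebra_1 and banach
  (complete, submultiplicative norm, norm 1 = 1), equipped with a complex scalar
  multiplication cscale extending the real one, and an involution star satisfying the
  C*-identity.\<close>

definition unital_cstar_algebra :: "('a::{real_normed_algebra_1,banach} \<Rightarrow> 'a) \<Rightarrow> (complex \<Rightarrow> 'a \<Rightarrow> 'a) \<Rightarrow> bool" where
  "unital_cstar_algebra star cscale \<longleftrightarrow>
     (\<forall>r x. cscale (complex_of_real r) x = scaleR r x) \<and>
     (\<forall>c x y. cscale c (x + y) = cscale c x + cscale c y) \<and>
     (\<forall>c d x. cscale (c + d) x = cscale c x + cscale d x) \<and>
     (\<forall>c d x. cscale (c * d) x = cscale c (cscale d x)) \<and>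
     (\<forall>c x y. cscale c (x * y) = cscale c x * y \<and> cscale c (x * y) = x * cscale c y) \<and>
     (\<forall>c x. norm (cscale c x) = cmod c * norm x) \<and>
     (\<forall>x y. star (x + y) = star x + star y) \<and>
     (\<forall>c x. star (cscale c x) = cscale (cnj c) (star x)) \<and>
     (\<forall>x. star (star x) = x) \<and>
     (\<forall>x y. star (x * y) = star y * star x) \<and>
     (\<forall>x. norm (star x * x) = (norm x)\<^sup>2)"

definition clinear_fun :: "(complex \<Rightarrow> 'a::real_vector \<Rightarrow> 'a) \<Rightarrow> ('a \<Rightarrow> complex) \<Rightarrow> bool" where
  "clinear_fun cscale f \<longleftrightarrow> (\<forall>x y. f (x + y) = f x + f y) \<and> (\<forall>c x. f (cscale c x) = c * f x)"

definition tracial_states :: "('a::{real_normed_algebra_1,banach} \<Rightarrow> 'a) \<Rightarrow> (complex \<Rightarrow> 'a \<Rightarrow> 'a) \<Rightarrow> ('a \<Rightarrow> complex) set" where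
  "tracial_states star cscale = {\<tau>. clinear_fun cscale \<tau> \<and>
       (\<forall>x. Im (\<tau> (star x * x)) = 0 \<and> Re (\<tau> (star x * x)) \<ge> 0) \<and>
       \<tau> 1 = 1 \<and> (\<forall>x y. \<tau> (x * y) = \<tau> (y * x))}"

text \<open>An action of the (discrete) group 'g (written additively, not necessarily abelian)
  by *-automorphisms.\<close>
definition cstar_action :: "('a::{real_normed_algebra_1,banach} \<Rightarrow> 'a) \<Rightarrow> (complex \<Rightarrow> 'a \<Rightarrow> 'a) \<Rightarrow> ('g::group_add \<Rightarrow> 'a \<Rightarrow> 'a) \<Rightarrow> bool" where
  "cstar_action star cscale \<alpha> \<longleftrightarrow>
     (\<forall>g. bij (\<alpha> g) \<and>
          (\<forall>x y. \<alpha> g (x + y) = \<alpha> g x + \<alpha> g y) \<and>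
          (\<forall>c x. \<alpha> g (cscale c x) = cscale c (\<alpha> g x)) \<and>
          (\<forall>x y. \<alpha> g (x * y) = \<alpha> g x * \<alpha> g y) \<and>
          (\<forall>x. \<alpha> g (star x) = star (\<alpha> g x))) \<and>
     \<alpha> 0 = id \<and> (\<forall>g h. \<alpha> (g + h) = \<alpha> g \<circ> \<alpha> h)"

definition fsupp :: "('g \<Rightarrow> 'a::zero) \<Rightarrow> 'g set" where
  "fsupp \<xi> = {g. \<xi> g \<noteq> 0}"

definition cc_inner :: "('a::{real_normed_algebra_1} \<Rightarrow> 'a) \<Rightarrow> ('g \<Rightarrow> 'a) \<Rightarrow> ('g \<Rightarrow> 'a) \<Rightarrow> 'a" where
  "cc_inner star \<xi> \<eta> = (\<Sum>g\<in>fsupp \<xi> \<union> fsupp \<eta>. star (\<xi> g) * \<eta> g)"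

text \<open>Uniform 2-seminorm: sup over tracial states of tau(y)^(1/2), applied to y = x* x
  (for x in A) or y = <xi,xi> (for xi in C_c(G,A)).\<close>
definition u2 :: "('a \<Rightarrow> complex) set \<Rightarrow> 'a \<Rightarrow> real" where
  "u2 T y = (SUP \<tau>\<in>T. sqrt (Re (\<tau> y)))"

definition norm2u :: "('a::{real_normed_algebra_1,banach} \<Rightarrow> 'a) \<Rightarrow> (complex \<Rightarrow> 'a \<Rightarrow> 'a) \<Rightarrow> 'a \<Rightarrow> real" where
  "norm2u star cscale x = u2 (tracial_states star cscale) (star x * x)"

definition norm2u_cc :: "('a::{real_normed_algebra_1,banach} \<Rightarrow> 'a) \<Rightarrow> (complex \<Rightarrow> 'a \<Rightarrow> 'a) \<Rightarrow> ('g \<Rightarrow> 'a) \<Rightarrow> real" where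
  "norm2u_cc star cscale \<xi> = u2 (tracial_states star cscale) (cc_inner star \<xi> \<xi>)"

definition tracially_amenable :: "('a::{real_normed_algebra_1,banach} \<Rightarrow> 'a) \<Rightarrow> (complex \<Rightarrow> 'a \<Rightarrow> 'a) \<Rightarrow> ('g::group_add \<Rightarrow> 'a \<Rightarrow> 'a) \<Rightarrow> bool" where
  "tracially_amenable star cscale \<alpha> \<longleftrightarrow>
     (\<forall>F K \<epsilon>. finite (F :: 'a set) \<and> finite (K :: 'g set) \<and> \<epsilon> > (0::real) \<longrightarrow>
        (\<exists>\<xi> :: 'g \<Rightarrow> 'a. finite (fsupp \<xi>) \<and>
           sqrt (norm (cc_inner star \<xi> \<xi>)) \<le> 1 \<and>
           (\<forall>a\<in>F. norm2u_cc star cscale (\<lambda>h. \<xi> h * a - a * \<xi> h) < \<epsilon>) \<and>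
           norm2u star cscale (cc_inner star \<xi> \<xi> - 1) < \<epsilon> \<and>
           (\<forall>g\<in>K. norm2u_cc star cscale (\<lambda>h. \<alpha> g (\<xi> (- g + h)) - \<xi> h) < \<epsilon>)))"

definition bounded_fun :: "('g \<Rightarrow> real) \<Rightarrow> bool" where
  "bounded_fun f \<longleftrightarrow> (\<exists>B. \<forall>x. \<bar>f x\<bar> \<le> B)"

definition amenable_group :: "'g::group_add itself \<Rightarrow> bool" where
  "amenable_group _ \<longleftrightarrow> (\<exists>m :: ('g \<Rightarrow> real) \<Rightarrow> real.
     (\<forall>f h. bounded_fun f \<and> bounded_fun h \<longrightarrow> m (\<lambda>x. f x + h x) = m f + m h) \<and>
     (\<forall>c f. bounded_fun f \<longrightarrow> m (\<lambda>x. c * f x) = c * m f) \<and>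
     (\<forall>f. bounded_fun f \<and> (\<forall>x. f x \<ge> 0) \<longrightarrow> m f \<ge> 0) \<and>
     m (\<lambda>_. 1) = 1 \<and>
     (\<forall>g f. bounded_fun f \<longrightarrow> m (\<lambda>x. f (- g + x)) = m f))"

end

theory Submission
  imports Defs "HOL-Computational_Algebra.Formal_Power_Series"
begin


locale cstar =
  fixes star :: "'a::{real_normed_algebra_1,banach} \<Rightarrow> 'a"
    and cscale :: "complex \<Rightarrow> 'a \<Rightarrow> 'a"
  assumes cs: "unital_cstar_algebra star cscale"
begin

lemma cscale_real: "cscale (complex_of_real r) x = scaleR r x"
  using cs unfolding unital_cstar_algebra_def by metis
lemma cscale_add: "cscale c (x + y) = cscale c x + cscale c y"
  using cs unfolding unital_cstar_algebra_def by metis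
lemma cscale_add2: "cscale (c + d) x = cscale c x + cscale d x"
  using cs unfolding unital_cstar_algebra_def by metis
lemma cscale_mult: "cscale (c * d) x = cscale c (cscale d x)"
  using cs unfolding unital_cstar_algebra_def by metis
lemma cscale_left: "cscale c (x * y) = cscale c x * y"
  using cs unfolding unital_cstar_algebra_def by metis
lemma cscale_right: "cscale c (x * y) = x * cscale c y"
  using cs unfolding unital_cstar_algebra_def by metis
lemma norm_cscale: "norm (cscale c x) = cmod c * norm x"
  using cs unfolding unital_cstar_algebra_def by metis
lemma star_add: "star (x + y) = star x + star y"
  using cs unfolding unital_cstar_algebra_def by metis
lemma star_cscale: "star (cscale c x) = cscale (cnj c) (star x)"
  using cs unfolding unital_cstar_algebra_def by metis
lemma star_star[simp]: "star (star x) = x"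
  using cs unfolding unital_cstar_algebra_def by metis
lemma star_mult: "star (x * y) = star y * star x"
  using cs unfolding unital_cstar_algebra_def by metis
lemma cstar_id: "norm (star x * x) = (norm x)\<^sup>2"
  using cs unfolding unital_cstar_algebra_def by metis

lemma star_zero[simp]: "star 0 = 0"
  using star_add[of 0 0] by simp
lemma star_minus: "star (- x) = - star x"
  using star_add[of x "-x"] by (metis add.commute add_eq_0_iff star_zero add.right_inverse)
lemma star_diff: "star (x - y) = star x - star y"
  using star_add[of x "-y"] star_minus[of y] by simp
lemma star_one[simp]: "star 1 = 1"
proof -
  have "star 1 * x = x" for x
    using star_mult[of "star x" 1] by (metis mult.right_neutral star_star)
  from this[of 1] show ?thesis by simp
qed
lemma star_scaleR: "star (scaleR r x) = scaleR r (star x)"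
  using star_cscale[of "complex_of_real r" x] by (simp add: cscale_real)
lemma star_sum: "star (sum f S) = sum (\<lambda>i. star (f i)) S"
  by (induction S rule: infinite_finite_induct) (auto simp: star_add)

lemma norm_star[simp]: "norm (star x) = norm x"
proof -
  have le: "norm y \<le> norm (star y)" for y
  proof (cases "y = 0")
    case False
    have "(norm y)\<^sup>2 \<le> norm (star y) * norm y"
      using cstar_id[of y] norm_mult_ineq[of "star y" y] by simp
    then show ?thesis using False by (simp add: power2_eq_square)
  qed simp
  show ?thesis using le[of x] le[of "star x"] by simp
qed

lemma bl_star: "bounded_linear star"
  by (rule bounded_linear_intro[where K=1]) (auto simp: star_add star_scaleR)

lemma cscale_one_mult: "cscale c 1 * x = cscale c x"
  using cscale_left[of c 1 x] by simp
lemma mult_cscale_one: "x * cscale c 1 = cscale c x"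
  using cscale_right[of c x 1] by simp

lemma gchoose_half_le: "\<bar>(1/2::real) gchoose n\<bar> \<le> 1"
proof (induction n)
  case (Suc k)
  have e: "((1/2::real) gchoose Suc k) = ((1/2) - of_nat k) * ((1/2) gchoose k) / (of_nat k + 1)"
    using gbinomial_mult_1[of "1/2::real" k] by (simp add: field_simps)
  have "\<bar>(1/2::real) - of_nat k\<bar> \<le> of_nat k + 1" by simp
  then have "\<bar>((1/2) - of_nat k) * ((1/2::real) gchoose k)\<bar> \<le> (of_nat k + 1) * 1"
    using mult_mono[OF \<open>\<bar>(1/2::real) - of_nat k\<bar> \<le> of_nat k + 1\<close> Suc.IH] by (simp add: abs_mult)
  then show ?case unfolding e by (simp add: abs_div field_simps)
qed simp

lemma star_power: "star h = h \<Longrightarrow> star (h ^ n) = h ^ n"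
  by (induction n) (auto simp: star_mult power_commutes)

lemma sqrt_exists:
  assumes sa: "star h = h" and nh: "norm h < 1"
  shows "\<exists>s. star s * s = 1 - h"
proof -
  define c where "c n = ((1/2::real) gchoose n) * (-1)^n" for n
  define a where "a n = scaleR (c n) (h ^ n)" for n
  have na: "norm (a n) \<le> norm h ^ n" for n
  proof -
    have "norm (a n) = \<bar>c n\<bar> * norm (h ^ n)" by (simp add: a_def)
    also have "\<dots> \<le> 1 * norm h ^ n"
      apply (rule mult_mono)
      using gchoose_half_le[of n] by (auto simp: c_def abs_mult norm_power_ineq)
    finally show ?thesis by simp
  qed
  have sn: "summable (\<lambda>n. norm (a n))"
    apply (rule summable_comparison_test[where g="\<lambda>n. norm h ^ n"])
    using na nh by (auto intro!: summable_geometric)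
  then have sa': "summable a" by (rule summable_norm_cancel)
  define s where "s = suminf a"
  have "star s = (\<Sum>n. star (a n))"
    unfolding s_def using bounded_linear.suminf[OF bl_star sa'] .
  also have "\<dots> = s" unfolding s_def a_def by (simp add: star_scaleR star_power[OF sa])
  finally have ss: "star s = s" .
  have prod: "(\<lambda>k. \<Sum>i\<le>k. a i * a (k - i)) sums (s * s)"
    unfolding s_def by (rule Cauchy_product_sums[OF sn sn])
  have trm: "(\<Sum>i\<le>k. a i * a (k - i)) = (if k = 0 then 1 else if k = 1 then - h else 0)" for k
  proof -
    have "(\<Sum>i\<le>k. a i * a (k - i)) = (\<Sum>i\<le>k. scaleR (c i * c (k - i)) (h ^ k))"
    proof (rule sum.cong)
      fix i assume "i \<in> {..k}"
      then have "h ^ i * h ^ (k - i) = h ^ k" by (simp flip: power_add)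
      then show "a i * a (k - i) = scaleR (c i * c (k - i)) (h ^ k)"
        by (simp add: a_def)
    qed simp
    also have "\<dots> = scaleR (\<Sum>i\<le>k. c i * c (k - i)) (h ^ k)"
      by (simp add: scaleR_sum_left)
    also have "(\<Sum>i\<le>k. c i * c (k - i)) = (\<Sum>i\<le>k. ((1/2::real) gchoose i) * ((1/2) gchoose (k - i))) * (-1)^k"
      unfolding sum_distrib_right c_def
    proof (rule sum.cong)
      fix i assume "i \<in> {..k}"
      then have "(-1::real)^i * (-1)^(k-i) = (-1)^k" by (simp flip: power_add)
      then show "(1 / 2 gchoose i) * (- 1) ^ i * ((1 / 2 gchoose (k - i)) * (- 1) ^ (k - i)) =
          (1 / 2 gchoose i) * (1 / 2 gchoose (k - i)) * (- 1::real) ^ k"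
        by (metis (no_types, lifting) mult.assoc mult.left_commute)
    qed simp
    also have "(\<Sum>i\<le>k. ((1/2::real) gchoose i) * ((1/2) gchoose (k - i))) = (1::real) gchoose k"
      using gbinomial_Vandermonde[of "1/2::real" "1/2" k] by (simp add: atMost_atLeast0)
    also have "(1::real) gchoose k = of_nat (1 choose k)"
      using binomial_gbinomial[of 1 k, where 'a=real] by simp
    finally show ?thesis
      by (cases k) (auto simp: binomial_eq_0)
  qed
  have "(\<lambda>k. \<Sum>i\<le>k. a i * a (k - i)) sums (1 - h)"
  proof -
    have "(\<lambda>k. if k = 0 then 1 else if k = 1 then - h else (0::'a)) sums (\<Sum>k::nat\<in>{0,1}. if k = 0 then 1 else if k = 1 then - h else (0::'a))"
      by (rule sums_finite[of "{0::nat,1}"]) simp_all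
    then show ?thesis unfolding trm by simp
  qed
  with prod have "s * s = 1 - h" using sums_unique2 by blast
  then show ?thesis using ss by metis
qed

end



context cstar
begin

abbreviation TS where "TS \<equiv> tracial_states star cscale"

lemma tr_add: "\<tau> \<in> TS \<Longrightarrow> \<tau> (x + y) = \<tau> x + \<tau> y"
  unfolding tracial_states_def clinear_fun_def by blast
lemma tr_cscale: "\<tau> \<in> TS \<Longrightarrow> \<tau> (cscale c x) = c * \<tau> x"
  unfolding tracial_states_def clinear_fun_def by blast
lemma tr_one: "\<tau> \<in> TS \<Longrightarrow> \<tau> 1 = 1"
  unfolding tracial_states_def by blast
lemma tr_comm: "\<tau> \<in> TS \<Longrightarrow> \<tau> (x * y) = \<tau> (y * x)"
  unfolding tracial_states_def by blast
lemma tr_Im: "\<tau> \<in> TS \<Longrightarrow> Im (\<tau> (star x * x)) = 0"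
  unfolding tracial_states_def by blast
lemma tr_Re: "\<tau> \<in> TS \<Longrightarrow> Re (\<tau> (star x * x)) \<ge> 0"
  unfolding tracial_states_def by blast
lemma tr_zero: "\<tau> \<in> TS \<Longrightarrow> \<tau> 0 = 0"
  using tr_add[of \<tau> 0 0] by simp
lemma tr_minus: "\<tau> \<in> TS \<Longrightarrow> \<tau> (- x) = - \<tau> x"
  using tr_add[of \<tau> x "-x"] tr_zero[of \<tau>] by (simp add: add_eq_0_iff)
lemma tr_diff: "\<tau> \<in> TS \<Longrightarrow> \<tau> (x - y) = \<tau> x - \<tau> y"
  using tr_add[of \<tau> x "-y"] tr_minus[of \<tau> y] by simp
lemma tr_scaleR: "\<tau> \<in> TS \<Longrightarrow> \<tau> (scaleR r x) = complex_of_real r * \<tau> x"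
  using tr_cscale[of \<tau> "complex_of_real r" x] by (simp add: cscale_real)
lemma tr_sum: "\<tau> \<in> TS \<Longrightarrow> \<tau> (sum f S) = sum (\<lambda>i. \<tau> (f i)) S"
  by (induction S rule: infinite_finite_induct) (auto simp: tr_add tr_zero)

lemma cscale_zero[simp]: "cscale 0 x = 0"
  using cscale_real[of 0 x] by simp

lemma tr_pol: assumes t: "\<tau> \<in> TS"
  shows "\<tau> (star (x + cscale c 1) * (x + cscale c 1)) =
     \<tau> (star x * x) + c * \<tau> (star x) + cnj c * \<tau> x + cnj c * c"
proof -
  have "star (x + cscale c 1) * (x + cscale c 1) =
     star x * x + cscale c (star x) + cscale (cnj c) x + cscale (cnj c * c) 1"
  proof -
    have "star (x + cscale c 1) * (x + cscale c 1) = (star x + cscale (cnj c) 1) * (x + cscale c 1)"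
      by (simp add: star_add star_cscale)
    also have "\<dots> = star x * x + star x * cscale c 1 + cscale (cnj c) 1 * x + cscale (cnj c) 1 * cscale c 1"
      by (simp add: distrib_left distrib_right add.assoc)
    also have "\<dots> = star x * x + cscale c (star x) + cscale (cnj c) x + cscale (cnj c * c) 1"
      by (simp add: mult_cscale_one cscale_one_mult cscale_mult) (metis cscale_mult mult.commute)
    finally show ?thesis .
  qed
  then show ?thesis using t by (simp add: tr_add tr_cscale tr_one)
qed

lemma tr_star: assumes t: "\<tau> \<in> TS" shows "\<tau> (star x) = cnj (\<tau> x)"
proof -
  have a: "Im (\<tau> (star x * x) + c * \<tau> (star x) + cnj c * \<tau> x + cnj c * c) = 0" for c
    using tr_Im[OF t, of "x + cscale c 1"] tr_pol[OF t, of x c] by simp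
  from a[of 1] tr_Im[OF t, of x] have "Im (\<tau> (star x)) = - Im (\<tau> x)" by simp
  moreover from a[of \<i>] tr_Im[OF t, of x] have "Re (\<tau> (star x)) = Re (\<tau> x)" by simp
  ultimately show ?thesis by (simp add: complex_eq_iff)
qed

lemma tr_cs: assumes t: "\<tau> \<in> TS"
  shows "2 * Re (\<tau> (star u * v)) \<le> Re (\<tau> (star u * u)) + Re (\<tau> (star v * v))"
proof -
  have "star (u - v) * (u - v) = star u * u - star u * v - star v * u + star v * v"
    by (simp add: star_diff algebra_simps)
  moreover have "\<tau> (star v * u) = cnj (\<tau> (star u * v))"
    using tr_star[OF t, of "star u * v"] by (simp add: star_mult)
  ultimately have "Re (\<tau> (star (u - v) * (u - v))) =
      Re (\<tau> (star u * u)) - 2 * Re (\<tau> (star u * v)) + Re (\<tau> (star v * v))"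
    using t by (simp add: tr_add tr_diff)
  with tr_Re[OF t, of "u - v"] show ?thesis by linarith
qed

lemma tr_sa_bound: assumes t: "\<tau> \<in> TS" and sa: "star a = a"
  shows "Re (\<tau> a) \<le> 2 * norm a"
proof (cases "a = 0")
  case True then show ?thesis using t by (simp add: tr_zero)
next
  case False
  define h where "h = scaleR (1 / (2 * norm a)) a"
  have "star h = h" unfolding h_def by (simp add: star_scaleR sa)
  moreover have "norm h < 1" using False by (simp add: h_def)
  ultimately obtain s where s: "star s * s = 1 - h" using sqrt_exists by blast
  have "0 \<le> Re (\<tau> (1 - h))" using tr_Re[OF t, of s] s by simp
  then have "Re (\<tau> h) \<le> 1" using t by (simp add: tr_diff tr_one)
  then have "Re (\<tau> a) / (2 * norm a) \<le> 1" using t by (simp add: h_def tr_scaleR)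
  then show ?thesis using False by (simp add: field_simps)
qed

lemma tr_Re_bound: assumes t: "\<tau> \<in> TS" shows "\<bar>Re (\<tau> x)\<bar> \<le> 2 * norm x"
proof -
  define a where "a = scaleR (1/2) (x + star x)"
  have sa: "star a = a" by (simp add: a_def star_scaleR star_add add.commute)
  have "Re (\<tau> a) = Re (\<tau> x)" using t by (simp add: a_def tr_scaleR tr_add tr_star)
  moreover have "norm a \<le> norm x"
  proof -
    have "norm (x + star x) \<le> 2 * norm x" using norm_triangle_ineq[of x "star x"] by simp
    then show ?thesis by (simp add: a_def)
  qed
  moreover have "star (- a) = - a" using sa by (simp add: star_minus)
  ultimately show ?thesis
    using tr_sa_bound[OF t sa] tr_sa_bound[OF t, of "-a"] t by (simp add: tr_minus)
qed

lemma tr_bound: assumes t: "\<tau> \<in> TS" shows "cmod (\<tau> x) \<le> 4 * norm x"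
proof -
  have "Im (\<tau> x) = Re (\<tau> (cscale (- \<i>) x))" using t by (simp add: tr_cscale)
  then have "\<bar>Im (\<tau> x)\<bar> \<le> 2 * norm x"
    using tr_Re_bound[OF t, of "cscale (- \<i>) x"] by (simp add: norm_cscale)
  moreover have "cmod (\<tau> x) \<le> \<bar>Re (\<tau> x)\<bar> + \<bar>Im (\<tau> x)\<bar>" by (rule cmod_le)
  ultimately show ?thesis using tr_Re_bound[OF t, of x] by linarith
qed

end



locale cact = cstar star cscale
  for star :: "'a::{real_normed_algebra_1,banach} \<Rightarrow> 'a" and cscale +
  fixes \<alpha> :: "'g::group_add \<Rightarrow> 'a \<Rightarrow> 'a"
  assumes act: "cstar_action star cscale \<alpha>"
begin

lemma al_add: "\<alpha> g (x + y) = \<alpha> g x + \<alpha> g y"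
  using act unfolding cstar_action_def by blast
lemma al_cscale: "\<alpha> g (cscale c x) = cscale c (\<alpha> g x)"
  using act unfolding cstar_action_def by blast
lemma al_mult: "\<alpha> g (x * y) = \<alpha> g x * \<alpha> g y"
  using act unfolding cstar_action_def by blast
lemma al_star: "\<alpha> g (star x) = star (\<alpha> g x)"
  using act unfolding cstar_action_def by blast
lemma al_bij: "bij (\<alpha> g)"
  using act unfolding cstar_action_def by blast
lemma al_comp: "\<alpha> (g + h) x = \<alpha> g (\<alpha> h x)"
  using act unfolding cstar_action_def by (metis comp_apply)
lemma al_zero: "\<alpha> 0 x = x"
  using act unfolding cstar_action_def by simp
lemma al_one: "\<alpha> g 1 = 1"
proof -
  have "\<alpha> g 1 * z = z" for z
  proof -
    obtain y where "z = \<alpha> g y" using al_bij[of g] by (metis bij_pointE)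
    then show ?thesis using al_mult[of g 1 y] by simp
  qed
  from this[of 1] show ?thesis by simp
qed

lemma tr_comp: assumes t: "\<tau> \<in> TS" shows "(\<lambda>x. \<tau> (\<alpha> g x)) \<in> TS"
proof -
  have e: "\<alpha> g (star x * x) = star (\<alpha> g x) * \<alpha> g x" for x by (simp add: al_mult al_star)
  show ?thesis
    unfolding tracial_states_def clinear_fun_def mem_Collect_eq
  proof (intro conjI allI)
    fix x y
    show "\<tau> (\<alpha> g (x + y)) = \<tau> (\<alpha> g x) + \<tau> (\<alpha> g y)" using tr_add[OF t] al_add by metis
    show "\<tau> (\<alpha> g (x * y)) = \<tau> (\<alpha> g (y * x))" using tr_comm[OF t] al_mult by metis
  next
    fix c x
    show "\<tau> (\<alpha> g (cscale c x)) = c * \<tau> (\<alpha> g x)" using tr_cscale[OF t] al_cscale by metis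
  next
    fix x
    show "Im (\<tau> (\<alpha> g (star x * x))) = 0" unfolding e by (rule tr_Im[OF t])
    show "0 \<le> Re (\<tau> (\<alpha> g (star x * x)))" unfolding e by (rule tr_Re[OF t])
  next
    show "\<tau> (\<alpha> g 1) = 1" using tr_one[OF t] al_one by simp
  qed
qed

lemma dir1:
  assumes am: "amenable_group TYPE('g)" and ne: "TS \<noteq> {}"
  shows "\<exists>\<tau>\<in>TS. \<forall>g x. \<tau> (\<alpha> g x) = \<tau> x"
proof -
  obtain \<tau>0 where t0: "\<tau>0 \<in> TS" using ne by blast
  obtain m :: "('g \<Rightarrow> real) \<Rightarrow> real" where
    madd: "\<And>f h. bounded_fun f \<Longrightarrow> bounded_fun h \<Longrightarrow> m (\<lambda>x. f x + h x) = m f + m h" and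
    mscal: "\<And>c f. bounded_fun f \<Longrightarrow> m (\<lambda>x. c * f x) = c * m f" and
    mpos: "\<And>f. bounded_fun f \<Longrightarrow> (\<forall>x. f x \<ge> 0) \<Longrightarrow> m f \<ge> 0" and
    mone: "m (\<lambda>_. 1) = 1" and
    minv: "\<And>g f. bounded_fun f \<Longrightarrow> m (\<lambda>x. f (- g + x)) = m f"
    using am unfolding amenable_group_def by blast
  define R where "R x = (\<lambda>k. Re (\<tau>0 (\<alpha> (- k) x)))" for x
  define I where "I x = (\<lambda>k. Im (\<tau>0 (\<alpha> (- k) x)))" for x
  define \<tau> where "\<tau> x = Complex (m (R x)) (m (I x))" for x
  have tk: "(\<lambda>x. \<tau>0 (\<alpha> (- k) x)) \<in> TS" for k using tr_comp[OF t0] .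
  have bR: "bounded_fun (R x)" for x
    unfolding bounded_fun_def R_def
    using tr_bound[OF tk] abs_Re_le_cmod order_trans by blast
  have bI: "bounded_fun (I x)" for x
    unfolding bounded_fun_def I_def
    using tr_bound[OF tk] abs_Im_le_cmod order_trans by blast
  have bc: "bounded_fun (\<lambda>k. c * f k)" if bf: "bounded_fun f" for c f
  proof -
    obtain B where "\<forall>x. \<bar>f x\<bar> \<le> B" using bf unfolding bounded_fun_def by blast
    then have "\<forall>x. \<bar>c * f x\<bar> \<le> \<bar>c\<bar> * B" by (simp add: abs_mult mult_left_mono)
    then show ?thesis unfolding bounded_fun_def by blast
  qed
  have b1: "bounded_fun (\<lambda>_::'g. 1::real)" unfolding bounded_fun_def by auto
  have m0: "m (\<lambda>_. 0) = 0" using mscal[OF b1, of 0] by simp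
  have mlin: "m (\<lambda>k. a * f k + b * g k) = a * m f + b * m g" if "bounded_fun f" "bounded_fun g" for a b f g
    using madd[OF bc[OF that(1)] bc[OF that(2)]] mscal that by simp
  have "\<tau> \<in> TS"
    unfolding tracial_states_def clinear_fun_def mem_Collect_eq
  proof (intro conjI allI)
    fix x y
    have "R (x + y) = (\<lambda>k. R x k + R y k)" "I (x + y) = (\<lambda>k. I x k + I y k)"
      by (auto simp: R_def I_def al_add tr_add[OF t0])
    then show "\<tau> (x + y) = \<tau> x + \<tau> y"
      unfolding \<tau>_def using madd bR bI by (simp add: complex_eq_iff)
  next
    fix c x
    have "R (cscale c x) = (\<lambda>k. Re c * R x k + (- Im c) * I x k)"
         "I (cscale c x) = (\<lambda>k. Im c * R x k + Re c * I x k)"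
      by (auto simp: R_def I_def al_cscale tr_cscale[OF t0])
    then have "m (R (cscale c x)) = Re c * m (R x) + (- Im c) * m (I x)"
       "m (I (cscale c x)) = Im c * m (R x) + Re c * m (I x)"
      using mlin[OF bR bI] by presburger+
    then show "\<tau> (cscale c x) = c * \<tau> x"
      unfolding \<tau>_def by (simp add: complex_eq_iff)
  next
    fix x
    have "I (star x * x) = (\<lambda>k. 0 * 1)"
      by (auto simp: I_def al_mult al_star tr_Im[OF t0])
    then show "Im (\<tau> (star x * x)) = 0" unfolding \<tau>_def using m0 by simp
    have "m (R (star x * x)) \<ge> 0"
      by (rule mpos[OF bR]) (auto simp: R_def al_mult al_star tr_Re[OF t0])
    then show "0 \<le> Re (\<tau> (star x * x))" unfolding \<tau>_def by simp
  next
    have "R 1 = (\<lambda>_. 1)" "I 1 = (\<lambda>_. 0)" by (auto simp: R_def I_def al_one tr_one[OF t0])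
    then show "\<tau> 1 = 1" unfolding \<tau>_def using mone m0 by (simp add: complex_eq_iff)
  next
    fix x y
    have "R (x * y) = R (y * x)" "I (x * y) = I (y * x)"
      by (auto simp: R_def I_def al_mult tr_comm[OF t0])
    then show "\<tau> (x * y) = \<tau> (y * x)" unfolding \<tau>_def by simp
  qed
  moreover have "\<tau> (\<alpha> g x) = \<tau> x" for g x
  proof -
    have "R (\<alpha> g x) = (\<lambda>k. R x (- g + k))" "I (\<alpha> g x) = (\<lambda>k. I x (- g + k))"
      by (auto simp: R_def I_def al_comp[symmetric] minus_add)
    then show ?thesis unfolding \<tau>_def using minv bR bI by simp
  qed
  ultimately show ?thesis by blast
qed

end



definition Bd :: "('g \<Rightarrow> real) \<Rightarrow> real" where
  "Bd f = (if bounded_fun f then (SUP x. \<bar>f x\<bar>) else 0)"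

lemma Bd_upper: "bounded_fun f \<Longrightarrow> \<bar>f x\<bar> \<le> Bd f"
  unfolding Bd_def bounded_fun_def
  by (auto intro!: cSUP_upper bdd_aboveI2)

lemma Bd_nonneg: "0 \<le> Bd f"
  by (metis Bd_def Bd_upper abs_ge_zero order_trans order_refl)

definition Ev :: "('g \<Rightarrow> real) \<Rightarrow> 'g set \<Rightarrow> ('g \<Rightarrow> real) \<Rightarrow> real" where
  "Ev \<mu> S f = (if bounded_fun f then (\<Sum>h\<in>S. f h * \<mu> h) else 0)"

lemma Ev_bound:
  assumes "finite S" "\<forall>h. \<mu> h \<ge> 0" "sum \<mu> S = 1"
  shows "\<bar>Ev \<mu> S f\<bar> \<le> Bd f"
proof (cases "bounded_fun f")
  case True
  have "\<bar>\<Sum>h\<in>S. f h * \<mu> h\<bar> \<le> (\<Sum>h\<in>S. \<bar>f h * \<mu> h\<bar>)" by (rule sum_abs)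
  also have "\<dots> \<le> (\<Sum>h\<in>S. Bd f * \<mu> h)"
    by (rule sum_mono) (use assms Bd_upper[OF True] in \<open>auto simp: abs_mult intro: mult_right_mono\<close>)
  also have "\<dots> = Bd f" using assms by (simp flip: sum_distrib_left)
  finally show ?thesis using True by (simp add: Ev_def)
qed (simp add: Ev_def Bd_nonneg)

lemma Ev_inv:
  fixes \<mu> :: "'g::group_add \<Rightarrow> real"
  assumes S: "finite S" "\<forall>h. h \<notin> S \<longrightarrow> \<mu> h = 0"
    and bf: "bounded_fun f"
  shows "\<bar>Ev \<mu> S (\<lambda>x. f (- g + x)) - Ev \<mu> S f\<bar> \<le>
          Bd f * (\<Sum>y\<in>S \<union> (\<lambda>x. - g + x) ` S. \<bar>\<mu> (g + y) - \<mu> y\<bar>)"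
proof -
  define W where "W = S \<union> (\<lambda>x. - g + x) ` S"
  have fW: "finite W" using S by (simp add: W_def)
  have bf2: "bounded_fun (\<lambda>x. f (- g + x))"
    using bf unfolding bounded_fun_def by blast
  have inj: "inj (\<lambda>x. - g + x)" by (rule injI) simp
  have "(\<Sum>x\<in>S. f (- g + x) * \<mu> x) = (\<Sum>y\<in>(\<lambda>x. - g + x) ` S. f y * \<mu> (g + y))"
    by (subst sum.reindex) (use inj in \<open>auto simp: inj_on_def add.assoc[symmetric]\<close>)
  also have "\<dots> = (\<Sum>y\<in>W. f y * \<mu> (g + y))"
  proof (rule sum.mono_neutral_left)
    show "\<forall>i\<in>W - (\<lambda>x. - g + x) ` S. f i * \<mu> (g + i) = 0"
    proof
      fix y assume "y \<in> W - (\<lambda>x. - g + x) ` S"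
      then have "g + y \<notin> S" by (auto simp: image_iff add.assoc[symmetric])
      then show "f y * \<mu> (g + y) = 0" using S by simp
    qed
  qed (use S in \<open>auto simp: W_def fW\<close>)
  finally have e1: "(\<Sum>x\<in>S. f (- g + x) * \<mu> x) = (\<Sum>y\<in>W. f y * \<mu> (g + y))" .
  have e2: "(\<Sum>x\<in>S. f x * \<mu> x) = (\<Sum>y\<in>W. f y * \<mu> y)"
    by (rule sum.mono_neutral_left) (use S fW in \<open>auto simp: W_def\<close>)
  have "\<bar>(\<Sum>y\<in>W. f y * \<mu> (g + y)) - (\<Sum>y\<in>W. f y * \<mu> y)\<bar> = \<bar>\<Sum>y\<in>W. f y * (\<mu> (g + y) - \<mu> y)\<bar>"
    by (simp add: sum_subtractf[symmetric] algebra_simps)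
  also have "\<dots> \<le> (\<Sum>y\<in>W. \<bar>f y * (\<mu> (g + y) - \<mu> y)\<bar>)" by (rule sum_abs)
  also have "\<dots> \<le> (\<Sum>y\<in>W. Bd f * \<bar>\<mu> (g + y) - \<mu> y\<bar>)"
    by (rule sum_mono) (auto simp: abs_mult intro: mult_right_mono Bd_upper[OF bf])
  also have "\<dots> = Bd f * (\<Sum>y\<in>W. \<bar>\<mu> (g + y) - \<mu> y\<bar>)" by (simp add: sum_distrib_left)
  finally show ?thesis using bf bf2 e1 e2 by (simp add: Ev_def W_def)
qed


definition Xt :: "(('g \<Rightarrow> real) \<Rightarrow> real) topology" where
  "Xt = product_topology (\<lambda>f. top_of_set {- Bd f .. Bd f}) UNIV"

lemma Xt_compact: "compact_space Xt"
  unfolding Xt_def compact_space_product_topology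
  by (auto intro!: compact_space_subtopology simp: compactin_euclidean_iff)


lemma Xt_proj: "continuous_map Xt euclideanreal (\<lambda>m. m f)"
proof -
  have "continuous_map Xt (top_of_set {- Bd f .. Bd f}) (\<lambda>m. m f)"
    unfolding Xt_def using continuous_map_product_projection[of f UNIV "\<lambda>f. top_of_set {- Bd f .. Bd f}"]
    by simp
  then show ?thesis by (rule continuous_map_into_fulltopology)
qed


lemma Xt_closed: "continuous_map Xt euclideanreal \<phi> \<Longrightarrow> closed A \<Longrightarrow> closedin Xt {m \<in> topspace Xt. \<phi> m \<in> A}"
  by (erule closedin_continuous_map_preimage) (simp only: closed_closedin)


lemma Xt_top: "m \<in> topspace Xt \<longleftrightarrow> (\<forall>f. \<bar>m f\<bar> \<le> Bd f)"
proof -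
  have "m \<in> topspace Xt \<longleftrightarrow> (\<forall>f. m f \<in> {- Bd f .. Bd f})"
    unfolding Xt_def topspace_product_topology PiE_UNIV_domain by (simp add: Pi_iff)
  also have "\<dots> \<longleftrightarrow> (\<forall>f. \<bar>m f\<bar> \<le> Bd f)" by (simp add: abs_le_iff) (meson minus_le_iff)
  finally show ?thesis .
qed

lemma reiter_amenable:
  assumes R: "\<And>K \<epsilon>. finite (K::'g::group_add set) \<Longrightarrow> \<epsilon> > 0 \<Longrightarrow>
     \<exists>(\<mu>::'g \<Rightarrow> real) S. finite S \<and> (\<forall>h. h \<notin> S \<longrightarrow> \<mu> h = 0) \<and> (\<forall>h. \<mu> h \<ge> 0) \<and> sum \<mu> S = 1 \<and>
        (\<forall>g\<in>K. (\<Sum>y\<in>S \<union> (\<lambda>x. - g + x) ` S. \<bar>\<mu> (g + y) - \<mu> y\<bar>) \<le> \<epsilon>)"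
  shows "amenable_group TYPE('g)"
proof -
  let ?T = "topspace (Xt :: (('g \<Rightarrow> real) \<Rightarrow> real) topology)"
  define U1 where "U1 = {{m \<in> ?T. m (\<lambda>x. f x + h x) - m f - m h \<in> {0}} | f h. bounded_fun f \<and> bounded_fun h}"
  define U2 where "U2 = {{m \<in> ?T. m (\<lambda>x. c * f x) - c * m f \<in> {0}} | c f. bounded_fun f}"
  define U3 where "U3 = {{m \<in> ?T. m f \<in> {0..}} | f. bounded_fun f \<and> (\<forall>x. f x \<ge> 0)}"
  define U4 where "U4 = {{m \<in> ?T. m (\<lambda>_. 1) \<in> {1}}}"
  define Inv where "Inv = (\<lambda>(g, f, \<delta>). {m \<in> ?T. \<bar>m (\<lambda>x. f (- g + x)) - m f\<bar> \<in> {..\<delta>}})"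
  define P0 where "P0 = {(g :: 'g, f :: 'g \<Rightarrow> real, \<delta> :: real). bounded_fun f \<and> \<delta> > 0}"
  define U where "U = U1 \<union> U2 \<union> U3 \<union> U4 \<union> Inv ` P0"
  have cl: "closedin Xt C" if CU: "C \<in> U" for C
  proof -
    consider "C \<in> U1" | "C \<in> U2" | "C \<in> U3" | "C \<in> U4" | "C \<in> Inv ` P0"
      using CU unfolding U_def by blast
    then show ?thesis
    proof cases
      case 1
      then obtain f h where "C = {m \<in> ?T. m (\<lambda>x. f x + h x) - m f - m h \<in> {0}}" unfolding U1_def by blast
      then show ?thesis by (simp only:) (rule Xt_closed, intro continuous_map_diff Xt_proj, simp)
    next
      case 2
      then obtain c f where "C = {m \<in> ?T. m (\<lambda>x. c * f x) - c * m f \<in> {0}}" unfolding U2_def by blast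
      then show ?thesis by (simp only:) (rule Xt_closed, intro continuous_map_diff Xt_proj continuous_map_real_mult_left, simp)
    next
      case 3
      then obtain f where "C = {m \<in> ?T. m f \<in> {0..}}" unfolding U3_def by blast
      then show ?thesis by (simp only:) (rule Xt_closed, rule Xt_proj, simp)
    next
      case 4
      then have "C = {m \<in> ?T. m (\<lambda>_. 1) \<in> {1}}" unfolding U4_def by blast
      then show ?thesis by (simp only:) (rule Xt_closed, rule Xt_proj, simp)
    next
      case 5
      then obtain g f \<delta> where "C = {m \<in> ?T. \<bar>m (\<lambda>x. f (- g + x)) - m f\<bar> \<in> {..\<delta>}}" unfolding Inv_def by auto
      then show ?thesis by (simp only:) (rule Xt_closed, intro continuous_map_real_abs continuous_map_diff Xt_proj, simp)
    qed
  qed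
  have fip: "\<Inter>F \<noteq> {}" if F: "finite F" "F \<subseteq> U" for F
  proof -
    have "F \<inter> Inv ` P0 \<subseteq> Inv ` P0" by blast
    moreover have "finite (F \<inter> Inv ` P0)" using F by simp
    ultimately obtain P where P: "P \<subseteq> P0" "finite P" "F \<inter> Inv ` P0 = Inv ` P"
      by (metis finite_subset_image)
    define K where "K = (\<lambda>(g, f, \<delta>). g) ` P"
    define D where "D = Min (insert 1 ((\<lambda>(g, f, \<delta>). \<delta>) ` P))"
    define M where "M = 1 + (\<Sum>p\<in>P. Bd (fst (snd p)))"
    have Mpos: "M \<ge> 1" unfolding M_def by (simp add: Bd_nonneg sum_nonneg)
    have Dpos: "D > 0" unfolding D_def using P P0_def by (auto simp: Min_gr_iff)
    have "finite K" using P by (simp add: K_def)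
    then obtain \<mu> :: "'g \<Rightarrow> real" and S where mu: "finite S" "\<forall>h. h \<notin> S \<longrightarrow> \<mu> h = 0" "\<forall>h. \<mu> h \<ge> 0" "sum \<mu> S = 1"
      "\<forall>g\<in>K. (\<Sum>y\<in>S \<union> (\<lambda>x. - g + x) ` S. \<bar>\<mu> (g + y) - \<mu> y\<bar>) \<le> D / M"
      using R[of K "D / M"] Dpos Mpos by auto
    define m where "m = Ev \<mu> S"
    have mT: "m \<in> ?T" unfolding Xt_top m_def using Ev_bound mu by blast
    have "m \<in> C" if C: "C \<in> F" for C
    proof -
      have "C \<in> U" using C F by blast
      then consider "C \<in> U1" | "C \<in> U2" | "C \<in> U3" | "C \<in> U4" | "C \<in> Inv ` P0"
        unfolding U_def by blast
      then show ?thesis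
      proof cases
        case 1
        then obtain f h where "bounded_fun f" "bounded_fun h"
          "C = {m \<in> ?T. m (\<lambda>x. f x + h x) - m f - m h \<in> {0}}" unfolding U1_def by blast
        moreover have "bounded_fun (\<lambda>x. f x + h x)" using calculation(1,2)
          unfolding bounded_fun_def by (meson abs_triangle_ineq add_mono order_trans)
        ultimately show ?thesis using mT
          by (simp add: m_def Ev_def sum.distrib distrib_right)
      next
        case 2
        then obtain c f where "bounded_fun f"
          "C = {m \<in> ?T. m (\<lambda>x. c * f x) - c * m f \<in> {0}}" unfolding U2_def by blast
        moreover have "bounded_fun (\<lambda>x. c * f x)" using calculation(1)
          unfolding bounded_fun_def by (metis abs_mult abs_ge_zero mult_left_mono)
        ultimately show ?thesis using mT
          by (simp add: m_def Ev_def sum_distrib_left mult.assoc)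
      next
        case 3
        then obtain f where "bounded_fun f" "\<forall>x. f x \<ge> 0"
          "C = {m \<in> ?T. m f \<in> {0..}}" unfolding U3_def by blast
        then show ?thesis using mT mu
          by (simp add: m_def Ev_def sum_nonneg)
      next
        case 4
        then show ?thesis using mT mu
          by (simp add: U4_def m_def Ev_def bounded_fun_def) (meson order_refl)
      next
        case 5
        then have "C \<in> Inv ` P" using C P by blast
        then obtain g f \<delta> where p: "(g, f, \<delta>) \<in> P" and Ce: "C = Inv (g, f, \<delta>)" by auto
        have bf: "bounded_fun f" "\<delta> > 0" using p P unfolding P0_def by auto
        have gK: "g \<in> K" using p unfolding K_def by force
        have "D \<le> \<delta>" unfolding D_def using p P by (auto intro!: Min_le image_eqI[where x="(g,f,\<delta>)"])
        have "Bd f \<le> M"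
        proof -
          have "Bd f = Bd (fst (snd (g, f, \<delta>)))" by simp
          also have "\<dots> \<le> (\<Sum>p\<in>P. Bd (fst (snd p)))"
            by (rule member_le_sum) (use p P in \<open>auto simp: Bd_nonneg\<close>)
          finally show ?thesis unfolding M_def by simp
        qed
        have "\<bar>m (\<lambda>x. f (- g + x)) - m f\<bar> \<le> Bd f * (D / M)"
          unfolding m_def
          using Ev_inv[OF mu(1,2) bf(1), of g] mu(5) gK Bd_nonneg[of f]
          by (meson mult_left_mono order_trans)
        also have "\<dots> \<le> M * (D / M)"
          using \<open>Bd f \<le> M\<close> Dpos Mpos by (intro mult_right_mono) auto
        also have "\<dots> \<le> \<delta>" using Mpos \<open>D \<le> \<delta>\<close> by simp
        finally show ?thesis using mT by (simp add: Ce Inv_def)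
      qed
    qed
    then show ?thesis by blast
  qed
  have "\<Inter>U \<noteq> {}"
    using Xt_compact unfolding compact_space_fip using cl fip by blast
  then obtain m where m: "\<And>C. C \<in> U \<Longrightarrow> m \<in> C" by blast
  show ?thesis unfolding amenable_group_def
  proof (intro exI conjI allI impI)
    fix f h :: "'g \<Rightarrow> real" assume "bounded_fun f \<and> bounded_fun h"
    then have "m \<in> {m \<in> ?T. m (\<lambda>x. f x + h x) - m f - m h \<in> {0}}"
      by (intro m) (auto simp: U_def U1_def)
    then show "m (\<lambda>x. f x + h x) = m f + m h" by simp
  next
    fix c and f :: "'g \<Rightarrow> real" assume "bounded_fun f"
    then have "m \<in> {m \<in> ?T. m (\<lambda>x. c * f x) - c * m f \<in> {0}}"
      by (intro m) (auto simp: U_def U2_def)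
    then show "m (\<lambda>x. c * f x) = c * m f" by simp
  next
    fix f :: "'g \<Rightarrow> real" assume "bounded_fun f \<and> (\<forall>x. f x \<ge> 0)"
    then have "m \<in> {m \<in> ?T. m f \<in> {0..}}"
      by (intro m) (auto simp: U_def U3_def)
    then show "m f \<ge> 0" by simp
  next
    have "m \<in> {m \<in> ?T. m (\<lambda>_. 1) \<in> {1}}"
      by (intro m) (auto simp: U_def U4_def)
    then show "m (\<lambda>_. 1) = 1" by simp
  next
    fix g and f :: "'g \<Rightarrow> real" assume bf: "bounded_fun f"
    have "\<bar>m (\<lambda>x. f (- g + x)) - m f\<bar> \<le> \<delta>" if "\<delta> > 0" for \<delta>
    proof -
      have "m \<in> Inv (g, f, \<delta>)"
        by (intro m) (use bf that in \<open>auto simp: U_def P0_def\<close>)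
      then show ?thesis by (simp add: Inv_def)
    qed
    then show "m (\<lambda>x. f (- g + x)) = m f"
      by (metis abs_le_zero_iff dense eq_iff_diff_eq_0 not_le)
  qed
qed



context cstar
begin

lemma u2_ge: assumes t: "\<tau> \<in> TS" shows "sqrt (Re (\<tau> z)) \<le> u2 TS z"
  unfolding u2_def
proof (rule cSUP_upper[OF t])
  show "bdd_above ((\<lambda>\<tau>. sqrt (Re (\<tau> z))) ` TS)"
  proof (rule bdd_aboveI2)
    fix \<sigma> assume s: "\<sigma> \<in> TS"
    have "Re (\<sigma> z) \<le> 4 * norm z"
      using tr_bound[OF s, of z] complex_Re_le_cmod order_trans by blast
    then show "sqrt (Re (\<sigma> z)) \<le> sqrt (4 * norm z)" by simp
  qed
qed

lemma u2_lt: assumes t: "\<tau> \<in> TS" and lt: "u2 TS z < e" and nn: "0 \<le> Re (\<tau> z)"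
  shows "Re (\<tau> z) < e\<^sup>2"
proof -
  have "sqrt (Re (\<tau> z)) < e" using u2_ge[OF t, of z] lt by linarith
  then have "(sqrt (Re (\<tau> z)))\<^sup>2 < e\<^sup>2"
    using nn by (intro power_strict_mono) auto
  then show ?thesis using nn by simp
qed

lemma tr_sq: assumes t: "\<tau> \<in> TS" shows "(Re (\<tau> y))\<^sup>2 \<le> Re (\<tau> (star y * y))"
proof -
  let ?t = "Re (\<tau> y)"
  have e1: "star (scaleR ?t 1) * y = scaleR ?t y" by (simp add: star_scaleR)
  have e2: "star (scaleR ?t 1) * scaleR ?t 1 = scaleR (?t * ?t) (1::'a)" by (simp add: star_scaleR)
  have "2 * Re (\<tau> (scaleR ?t y)) \<le> Re (\<tau> (scaleR (?t * ?t) (1::'a))) + Re (\<tau> (star y * y))"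
    using tr_cs[OF t, of "scaleR ?t 1" y] unfolding e1 e2 .
  then have "2 * (?t * ?t) \<le> ?t * ?t + Re (\<tau> (star y * y))"
    using t by (simp add: tr_scaleR tr_one)
  then show ?thesis by (simp add: power2_eq_square)
qed

lemma tr_diffsq:
  assumes t: "\<tau> \<in> TS" and e: "e > 0"
  shows "\<bar>Re (\<tau> (star a * a)) - Re (\<tau> (star b * b))\<bar> \<le>
         (1 + 1 / e) * Re (\<tau> (star (a - b) * (a - b))) + e * Re (\<tau> (star b * b))"
proof -
  define d where "d = a - b"
  have "star a * a - star b * b = star d * d + star d * b + star b * d"
    by (simp add: d_def star_diff algebra_simps)
  then have eq: "Re (\<tau> (star a * a)) - Re (\<tau> (star b * b)) =
      Re (\<tau> (star d * d)) + Re (\<tau> (star d * b)) + Re (\<tau> (star b * d))"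
    using t by (metis (no_types, lifting) plus_complex.sel(1) minus_complex.sel(1) tr_add tr_diff)
  have "\<tau> (star b * d) = cnj (\<tau> (star d * b))"
    using tr_star[OF t, of "star d * b"] by (simp add: star_mult)
  then have eq2: "Re (\<tau> (star b * d)) = Re (\<tau> (star d * b))" by simp
  let ?D = "Re (\<tau> (star d * d))" and ?B = "Re (\<tau> (star b * b))" and ?X = "Re (\<tau> (star d * b))"
  have c1: "2 * (r * ?X) \<le> ?D + r * r * ?B" for r
  proof -
    have e1: "star d * scaleR r b = scaleR r (star d * b)" by simp
    have e2: "star (scaleR r b) * scaleR r b = scaleR (r * r) (star b * b)" by (simp add: star_scaleR)
    have "2 * Re (\<tau> (scaleR r (star d * b))) \<le> ?D + Re (\<tau> (scaleR (r * r) (star b * b)))"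
      using tr_cs[OF t, of d "scaleR r b"] unfolding e1 e2 .
    then show ?thesis using t by (simp add: tr_scaleR)
  qed
  have "2 * (e * ?X) \<le> ?D + e * e * ?B" using c1[of e] .
  moreover have "2 * ((- e) * ?X) \<le> ?D + e * e * ?B" using c1[of "- e"] by simp
  ultimately have "\<bar>2 * ?X\<bar> \<le> ?D / e + e * ?B"
    using e by (auto simp: field_simps abs_le_iff)
  moreover have "?D \<ge> 0" by (rule tr_Re[OF t])
  ultimately show ?thesis using eq eq2 unfolding d_def[symmetric]
    by (simp add: field_simps abs_le_iff)
qed

end



context cact
begin

lemma al_0: "\<alpha> g 0 = 0"
  using al_add[of g 0 0] by simp

lemma reiter:
  assumes t: "\<tau> \<in> TS" and inv: "\<forall>g x. \<tau> (\<alpha> g x) = \<tau> x"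
    and ta: "tracially_amenable star cscale \<alpha>"
    and K: "finite K" and ep: "\<epsilon> > 0"
  shows "\<exists>(\<mu>::'g \<Rightarrow> real) S. finite S \<and> (\<forall>h. h \<notin> S \<longrightarrow> \<mu> h = 0) \<and> (\<forall>h. \<mu> h \<ge> 0) \<and> sum \<mu> S = 1 \<and>
        (\<forall>g\<in>K. (\<Sum>y\<in>S \<union> (\<lambda>x. - g + x) ` S. \<bar>\<mu> (g + y) - \<mu> y\<bar>) \<le> \<epsilon>)"
proof -
  define e where "e = min (1/2) (\<epsilon>/8)"
  have e0: "e > 0" "e \<le> 1/2" "e \<le> \<epsilon>/8" using ep by (auto simp: e_def)
  obtain \<xi> :: "'g \<Rightarrow> 'a" where xi: "finite (fsupp \<xi>)"
     "norm2u star cscale (cc_inner star \<xi> \<xi> - 1) < e"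
     "\<forall>g\<in>uminus ` K. norm2u_cc star cscale (\<lambda>h. \<alpha> g (\<xi> (- g + h)) - \<xi> h) < e"
    using ta[unfolded tracially_amenable_def, rule_format, of "{}" "uminus ` K" e] K e0 by auto
  define S where "S = fsupp \<xi>"
  define \<nu> where "\<nu> h = Re (\<tau> (star (\<xi> h) * \<xi> h))" for h
  have nu0: "\<nu> h \<ge> 0" for h using tr_Re[OF t] by (simp add: \<nu>_def)
  have nuS: "\<nu> h = 0" if "h \<notin> S" for h using that by (simp add: S_def fsupp_def \<nu>_def tr_zero[OF t])
  define N where "N = sum \<nu> S"
  have ccS: "cc_inner star \<xi> \<xi> = (\<Sum>h\<in>S. star (\<xi> h) * \<xi> h)" by (simp add: cc_inner_def S_def)
  define y where "y = cc_inner star \<xi> \<xi> - 1"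
  have "Re (\<tau> y) = N - 1" using t by (simp add: y_def ccS tr_diff tr_sum tr_one N_def \<nu>_def Re_sum)
  moreover have "Re (\<tau> (star y * y)) < e\<^sup>2"
    using u2_lt[OF t xi(2)[unfolded norm2u_def y_def[symmetric]] tr_Re[OF t]] .
  moreover have "(Re (\<tau> y))\<^sup>2 \<le> Re (\<tau> (star y * y))" by (rule tr_sq[OF t])
  ultimately have "(N - 1)\<^sup>2 < e\<^sup>2" by simp
  then have "sqrt ((N - 1)\<^sup>2) < sqrt (e\<^sup>2)" by (simp only: real_sqrt_less_iff)
  then have Nb: "\<bar>N - 1\<bar> < e" using e0 by simp
  have N1: "N \<ge> 1/2" "N \<le> 3/2" using Nb e0 by auto
  define \<mu> where "\<mu> h = \<nu> h / N" for h
  show ?thesis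
  proof (intro exI conjI allI impI ballI)
    show "finite S" using xi(1) by (simp add: S_def)
  next
    fix h assume "h \<notin> S" then show "\<mu> h = 0" by (simp add: \<mu>_def nuS)
  next
    fix h show "\<mu> h \<ge> 0" using nu0[of h] N1 by (simp add: \<mu>_def)
  next
    show "sum \<mu> S = 1" using N1 by (simp add: \<mu>_def N_def flip: sum_divide_distrib)
  next
    fix g' assume g': "g' \<in> K"
    define g where "g = - g'"
    have gK: "g \<in> uminus ` K" using g' by (simp add: g_def)
    define d where "d = (\<lambda>h. \<alpha> g (\<xi> (- g + h)) - \<xi> h)"
    have d_alt: "d h = \<alpha> g (\<xi> (g' + h)) - \<xi> h" for h by (simp add: d_def g_def)
    define W where "W = S \<union> (\<lambda>x. - g' + x) ` S"
    have fW: "finite W" using xi(1) by (simp add: W_def S_def)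
    have supp: "fsupp d \<subseteq> W"
    proof
      fix h assume "h \<in> fsupp d"
      then have "\<xi> (g' + h) \<noteq> 0 \<or> \<xi> h \<noteq> 0" by (auto simp: fsupp_def d_alt al_0)
      then show "h \<in> W"
      proof
        assume "\<xi> (g' + h) \<noteq> 0"
        then have "g' + h \<in> S" by (simp add: S_def fsupp_def)
        moreover have "h = - g' + (g' + h)" by (simp add: add.assoc[symmetric])
        ultimately show ?thesis unfolding W_def by blast
      qed (simp add: W_def S_def fsupp_def)
    qed
    let ?Q = "\<lambda>h. Re (\<tau> (star (d h) * d h))"
    have E: "(\<Sum>h\<in>W. ?Q h) < e\<^sup>2"
    proof -
      have "Re (\<tau> (cc_inner star d d)) = (\<Sum>h\<in>fsupp d. ?Q h)"
        using t by (simp add: cc_inner_def tr_sum Re_sum)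
      also have "\<dots> = (\<Sum>h\<in>W. ?Q h)"
        by (rule sum.mono_neutral_left[OF fW supp]) (auto simp: fsupp_def tr_zero[OF t])
      finally have eq: "Re (\<tau> (cc_inner star d d)) = (\<Sum>h\<in>W. ?Q h)" .
      have "0 \<le> Re (\<tau> (cc_inner star d d))" unfolding eq by (rule sum_nonneg) (rule tr_Re[OF t])
      from u2_lt[OF t xi(3)[rule_format, OF gK, unfolded norm2u_cc_def d_def[symmetric]] this]
      show ?thesis unfolding eq .
    qed
    have pt: "\<bar>\<nu> (g' + h) - \<nu> h\<bar> \<le> (1 + 1/e) * ?Q h + e * \<nu> h" for h
    proof -
      have "star (\<alpha> g (\<xi> (g' + h))) * \<alpha> g (\<xi> (g' + h)) = \<alpha> g (star (\<xi> (g' + h)) * \<xi> (g' + h))"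
        by (simp add: al_star al_mult)
      then have "\<nu> (g' + h) = Re (\<tau> (star (\<alpha> g (\<xi> (g' + h))) * \<alpha> g (\<xi> (g' + h))))"
        using inv by (simp add: \<nu>_def)
      then show ?thesis
        using tr_diffsq[OF t e0(1), of "\<alpha> g (\<xi> (g' + h))" "\<xi> h"] by (simp add: d_alt \<nu>_def)
    qed
    have sW: "(\<Sum>h\<in>W. \<nu> h) = N"
      unfolding N_def by (rule sum.mono_neutral_right[OF fW]) (auto simp: W_def nuS)
    have "(\<Sum>h\<in>W. \<bar>\<nu> (g' + h) - \<nu> h\<bar>) \<le> (\<Sum>h\<in>W. (1 + 1/e) * ?Q h + e * \<nu> h)"
      by (rule sum_mono) (rule pt)
    also have "\<dots> = (1 + 1/e) * (\<Sum>h\<in>W. ?Q h) + e * N"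
      by (simp add: sum.distrib sum_distrib_left[symmetric] sW)
    also have "\<dots> \<le> (1 + 1/e) * e\<^sup>2 + e * (3/2)"
      using E e0 N1 by (intro add_mono mult_left_mono) auto
    also have "\<dots> \<le> 3 * e" using e0 by (simp add: power2_eq_square field_simps)
    finally have s1: "(\<Sum>h\<in>W. \<bar>\<nu> (g' + h) - \<nu> h\<bar>) \<le> 3 * e" .
    have "(\<Sum>h\<in>W. \<bar>\<mu> (g' + h) - \<mu> h\<bar>) = (\<Sum>h\<in>W. \<bar>\<nu> (g' + h) - \<nu> h\<bar>) / N"
      using N1 by (simp add: \<mu>_def sum_divide_distrib abs_divide flip: diff_divide_distrib)
    also have "\<dots> \<le> (3 * e) / (1/2)"
      using s1 N1 e0 by (intro frac_le) auto
    also have "\<dots> \<le> \<epsilon>" using e0 by simp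
    finally show "(\<Sum>y\<in>S \<union> (\<lambda>x. - g' + x) ` S. \<bar>\<mu> (g' + y) - \<mu> y\<bar>) \<le> \<epsilon>"
      unfolding W_def .
  qed
qed

end


theorem lemma2p9:
  fixes star :: "'a::{real_normed_algebra_1,banach} \<Rightarrow> 'a"
    and cscale :: "complex \<Rightarrow> 'a \<Rightarrow> 'a"
    and \<alpha> :: "'g::group_add \<Rightarrow> 'a \<Rightarrow> 'a"
  assumes "unital_cstar_algebra star cscale"
    and "cstar_action star cscale \<alpha>"
    and "tracially_amenable star cscale \<alpha>"
    and "tracial_states star cscale \<noteq> {}"
  shows "amenable_group TYPE('g) \<longleftrightarrow>
         (\<exists>\<tau>\<in>tracial_states star cscale. \<forall>g x. \<tau> (\<alpha> g x) = \<tau> x)"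
proof -
  interpret cact star cscale \<alpha>
    using assms(1,2) by (simp add: cact_def cstar_def cact_axioms_def)
  show ?thesis
  proof
    assume am: "amenable_group TYPE('g)"
    show "\<exists>\<tau>\<in>tracial_states star cscale. \<forall>g x. \<tau> (\<alpha> g x) = \<tau> x"
      by (rule dir1[OF am assms(4)])
  next
    assume "\<exists>\<tau>\<in>tracial_states star cscale. \<forall>g x. \<tau> (\<alpha> g x) = \<tau> x"
    then obtain \<tau> where t: "\<tau> \<in> tracial_states star cscale" and inv: "\<forall>g x. \<tau> (\<alpha> g x) = \<tau> x"
      by blast
    show "amenable_group TYPE('g)"
      by (rule reiter_amenable) (rule reiter[OF t inv assms(3)])
  qed
qed

end
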